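(* For all sufficiently large $N$, the semigroup generated by $\Gamma_N$ is Zariski dense in $\mathrm{SL}(3,\mathbb R)$.
   Context: Let $A_1=\begin{pmatrix}1&1&1\\0&1&0\\0&0&1\end{pmatrix}$, $A_2=\begin{pmatrix}1&0&0\\1&1&1\\0&0&1\end{pmatrix}$, $A_3=\begin{pmatrix}1&0&0\\0&1&0\\1&1&1\end{pmatrix}$, $\Gamma=\{A_i^nA_j: i\ne j\in\{1,2,3\},\ n\ge1\}$, and let $(\Gamma_N)_N$ be an increasing sequence of finite subsets of $\Gamma$ with $\bigcup_N\Gamma_N=\Gamma$. The Zariski topology on $\mathrm{SL}(3,\mathbb R)$ has as closed sets the common zero sets of families of polynomials in the matrix entries. *)

theory Defs
  imports "HOL-Analysis.Analysis"
begin

type_synonym mat3 = "real^3^3"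

text \<open>Rows are listed top to bottom; vector [a,b,c] has components 1,2,3.\<close>
definition A1 :: mat3 where
  "A1 = vector [vector [1,1,1], vector [0,1,0], vector [0,0,1]]"
definition A2 :: mat3 where
  "A2 = vector [vector [1,0,0], vector [1,1,1], vector [0,0,1]]"
definition A3 :: mat3 where
  "A3 = vector [vector [1,0,0], vector [0,1,0], vector [1,1,1]]"

definition Amat :: "nat \<Rightarrow> mat3" where
  "Amat i = (if i = 1 then A1 else if i = 2 then A2 else A3)"

definition matpow :: "mat3 \<Rightarrow> nat \<Rightarrow> mat3" where
  "matpow A n = (((**) A) ^^ n) (mat 1)"

definition GammaSet :: "mat3 set" where
  "GammaSet = {matpow (Amat i) n ** Amat j | i j n.
              i \<in> {1,2,3} \<and> j \<in> {1,2,3} \<and> i \<noteq> j \<and> n \<ge> 1}"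

definition SL3 :: "mat3 set" where
  "SL3 = {A. det A = 1}"

inductive polyfun :: "(mat3 \<Rightarrow> real) \<Rightarrow> bool" where
  const: "polyfun (\<lambda>_. c)"
| entry: "polyfun (\<lambda>A. A $ i $ j)"
| add: "polyfun p \<Longrightarrow> polyfun q \<Longrightarrow> polyfun (\<lambda>A. p A + q A)"
| mult: "polyfun p \<Longrightarrow> polyfun q \<Longrightarrow> polyfun (\<lambda>A. p A * q A)"

definition zariski_closure_SL3 :: "mat3 set \<Rightarrow> mat3 set" where
  "zariski_closure_SL3 S =
     {x \<in> SL3. \<forall>p. polyfun p \<and> (\<forall>s\<in>S. p s = 0) \<longrightarrow> p x = 0}"

definition zariski_dense_SL3 :: "mat3 set \<Rightarrow> bool" where
  "zariski_dense_SL3 S \<longleftrightarrow> S \<subseteq> SL3 \<and> zariski_closure_SL3 S = SL3"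

inductive_set semigroup_gen :: "mat3 set \<Rightarrow> mat3 set" for G where
  gen: "g \<in> G \<Longrightarrow> g \<in> semigroup_gen G"
| mul: "a \<in> semigroup_gen G \<Longrightarrow> b \<in> semigroup_gen G \<Longrightarrow> a ** b \<in> semigroup_gen G"

end

theory Submission
  imports Defs "HOL-Library.Function_Algebras" "HOL-Computational_Algebra.Polynomial"
begin


definition cl :: "mat3 set \<Rightarrow> mat3 set" where
  "cl S = {x. \<forall>p. polyfun p \<and> (\<forall>s\<in>S. p s = 0) \<longrightarrow> p x = 0}"

lemma polyfun_sum3:
  "polyfun f \<Longrightarrow> polyfun g \<Longrightarrow> polyfun h \<Longrightarrow> polyfun (\<lambda>A. f A + g A + h A)"
  by (intro polyfun.add)

lemma polyfun_lmul: "polyfun p \<Longrightarrow> polyfun (\<lambda>X. p (B ** X))"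
proof (induction rule: polyfun.induct)
  case (entry i j)
  have "polyfun (\<lambda>X. B$i$1 * X$1$j + B$i$2 * X$2$j + B$i$3 * X$3$j)"
    by (intro polyfun.add polyfun.mult polyfun.const polyfun.entry)
  then show ?case by (simp add: matrix_matrix_mult_def sum_3)
qed (auto intro: polyfun.intros)

lemma polyfun_rmul: "polyfun p \<Longrightarrow> polyfun (\<lambda>X. p (X ** B))"
proof (induction rule: polyfun.induct)
  case (entry i j)
  have "polyfun (\<lambda>X. X$i$1 * B$1$j + X$i$2 * B$2$j + X$i$3 * B$3$j)"
    by (intro polyfun.add polyfun.mult polyfun.const polyfun.entry)
  then show ?case by (simp add: matrix_matrix_mult_def sum_3)
qed (auto intro: polyfun.intros)

lemma polyfun_line: "polyfun p \<Longrightarrow> \<exists>Q. \<forall>t. p (C + t *\<^sub>R D) = poly Q t"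
proof (induction rule: polyfun.induct)
  case (const c) then show ?case by (rule exI[of _ "[:c:]"]) simp
next
  case (entry i j) then show ?case by (rule exI[of _ "[:C$i$j, D$i$j:]"]) simp
next
  case (add p q) then obtain P Q where "\<forall>t. p (C + t *\<^sub>R D) = poly P t" "\<forall>t. q (C + t *\<^sub>R D) = poly Q t" by blast
  then show ?case by (intro exI[of _ "P + Q"]) simp
next
  case (mult p q) then obtain P Q where "\<forall>t. p (C + t *\<^sub>R D) = poly P t" "\<forall>t. q (C + t *\<^sub>R D) = poly Q t" by blast
  then show ?case by (intro exI[of _ "P * Q"]) simp
qed

interpretation fv: vector_space "\<lambda>(c::real) (f::mat3 \<Rightarrow> real). (\<lambda>x. c * f x)"
  by unfold_locales (auto simp: plus_fun_def algebra_simps)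

lemma sum_apply_fun: "(sum f A) x = (\<Sum>a\<in>A. (f a) x)" for f :: "'b \<Rightarrow> 'c \<Rightarrow> 'd::comm_monoid_add"
  by (induction A rule: infinite_finite_induct) auto

definition pm :: "(mat3 \<Rightarrow> real) \<Rightarrow> (mat3 \<Rightarrow> real) \<Rightarrow> (mat3 \<Rightarrow> real)" where
  "pm f g = (\<lambda>X. f X * g X)"

lemma span_pm1:
  assumes "f \<in> fv.span B1" "g \<in> B2"
  shows "pm f g \<in> fv.span ((\<lambda>(a,b). pm a b) ` (B1 \<times> B2))"
  using assms(1)
proof (induction rule: fv.span_induct_alt)
  case base
  have "(\<lambda>a::mat3. 0::real) \<in> fv.span ((\<lambda>(a,b). pm a b) ` (B1 \<times> B2))"
    using fv.span_zero by (simp add: zero_fun_def)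
  then show ?case by (simp add: pm_def zero_fun_def)
next
  case (step c x y)
  have eq: "pm ((\<lambda>X. c * x X) + y) g = (\<lambda>X. c * pm x g X) + pm y g"
    by (simp add: pm_def plus_fun_def algebra_simps)
  have A: "pm x g \<in> fv.span ((\<lambda>(a,b). pm a b) ` (B1 \<times> B2))"
    using step assms(2) by (intro fv.span_base) auto
  show ?case unfolding eq by (rule fv.span_add[OF fv.span_scale[OF A] step.IH])
qed

lemma span_pm:
  assumes "f \<in> fv.span B1" "g \<in> fv.span B2"
  shows "pm f g \<in> fv.span ((\<lambda>(a,b). pm a b) ` (B1 \<times> B2))"
  using assms(2)
proof (induction rule: fv.span_induct_alt)
  case base
  have "(\<lambda>a::mat3. 0::real) \<in> fv.span ((\<lambda>(a,b). pm a b) ` (B1 \<times> B2))"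
    using fv.span_zero by (simp add: zero_fun_def)
  then show ?case by (simp add: pm_def zero_fun_def)
next
  case (step c x y)
  have eq: "pm f ((\<lambda>X. c * x X) + y) = (\<lambda>X. c * pm f x X) + pm f y"
    by (simp add: pm_def plus_fun_def algebra_simps)
  have A: "pm f x \<in> fv.span ((\<lambda>(a,b). pm a b) ` (B1 \<times> B2))"
    using span_pm1[OF assms(1) step(1)] .
  show ?case unfolding eq by (rule fv.span_add[OF fv.span_scale[OF A] step.IH])
qed

definition Ent :: "(mat3 \<Rightarrow> real) set" where
  "Ent = (\<lambda>(k,l). \<lambda>X. X$k$l) ` UNIV"

definition Lin :: "(mat3 \<Rightarrow> mat3) set" where
  "Lin = {\<Phi>. \<forall>a b. (\<lambda>X. \<Phi> X $ a $ b) \<in> fv.span Ent}"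

lemma finite_Ent: "finite Ent" unfolding Ent_def by simp

lemma polyfun_span:
  "polyfun p \<Longrightarrow> \<exists>B. finite B \<and> (\<forall>\<Phi>\<in>Lin. (\<lambda>X. p (\<Phi> X)) \<in> fv.span B)"
proof (induction rule: polyfun.induct)
  case (const c)
  show ?case by (rule exI[of _ "{\<lambda>_. c}"]) (auto intro: fv.span_base)
next
  case (entry i j)
  show ?case by (rule exI[of _ Ent]) (auto simp: Lin_def finite_Ent)
next
  case (add p q)
  then obtain B1 B2 where h: "finite B1" "\<forall>\<Phi>\<in>Lin. (\<lambda>X. p (\<Phi> X)) \<in> fv.span B1"
    "finite B2" "\<forall>\<Phi>\<in>Lin. (\<lambda>X. q (\<Phi> X)) \<in> fv.span B2" by blast
  show ?case
  proof (intro exI[of _ "B1 \<union> B2"] conjI ballI)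
    show "finite (B1 \<union> B2)" using h by simp
    fix \<Phi> assume "\<Phi> \<in> Lin"
    have a: "(\<lambda>X. p (\<Phi> X)) \<in> fv.span (B1 \<union> B2)"
      using h(2) \<open>\<Phi> \<in> Lin\<close> fv.span_mono[of B1 "B1 \<union> B2"] by blast
    have b: "(\<lambda>X. q (\<Phi> X)) \<in> fv.span (B1 \<union> B2)"
      using h(4) \<open>\<Phi> \<in> Lin\<close> fv.span_mono[of B2 "B1 \<union> B2"] by blast
    have "(\<lambda>X. p (\<Phi> X)) + (\<lambda>X. q (\<Phi> X)) \<in> fv.span (B1 \<union> B2)" by (rule fv.span_add[OF a b])
    then show "(\<lambda>X. p (\<Phi> X) + q (\<Phi> X)) \<in> fv.span (B1 \<union> B2)" by (simp add: plus_fun_def)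
  qed
next
  case (mult p q)
  then obtain B1 B2 where h: "finite B1" "\<forall>\<Phi>\<in>Lin. (\<lambda>X. p (\<Phi> X)) \<in> fv.span B1"
    "finite B2" "\<forall>\<Phi>\<in>Lin. (\<lambda>X. q (\<Phi> X)) \<in> fv.span B2" by blast
  show ?case
  proof (intro exI[of _ "(\<lambda>(a,b). pm a b) ` (B1 \<times> B2)"] conjI ballI)
    show "finite ((\<lambda>(a,b). pm a b) ` (B1 \<times> B2))" using h by simp
    fix \<Phi> assume "\<Phi> \<in> Lin"
    have "pm (\<lambda>X. p (\<Phi> X)) (\<lambda>X. q (\<Phi> X)) \<in> fv.span ((\<lambda>(a,b). pm a b) ` (B1 \<times> B2))"
      using h(2,4) \<open>\<Phi> \<in> Lin\<close> by (intro span_pm) auto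
    then show "(\<lambda>X. p (\<Phi> X) * q (\<Phi> X)) \<in> fv.span ((\<lambda>(a,b). pm a b) ` (B1 \<times> B2))"
      by (simp add: pm_def)
  qed
qed

lemma lin_lmul: "(\<lambda>X. W ** X) \<in> Lin"
proof -
  have "(\<lambda>X. (W ** X) $ a $ b) \<in> fv.span Ent" for a b
  proof -
    have e: "(\<lambda>X. X$k$b) \<in> fv.span Ent" for k by (rule fv.span_base) (auto simp: Ent_def)
    have eq: "(\<lambda>X. (W ** X) $ a $ b) = ((\<lambda>X. W$a$1 * X$1$b) + (\<lambda>X. W$a$2 * X$2$b)) + (\<lambda>X. W$a$3 * X$3$b)"
      by (simp add: matrix_matrix_mult_def sum_3 plus_fun_def)
    show ?thesis unfolding eq
      by (intro fv.span_add fv.span_scale e)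
  qed
  then show ?thesis by (simp add: Lin_def)
qed

lemma lin_rmul: "(\<lambda>X. X ** W) \<in> Lin"
proof -
  have "(\<lambda>X. (X ** W) $ a $ b) \<in> fv.span Ent" for a b
  proof -
    have e: "(\<lambda>X. X$a$k) \<in> fv.span Ent" for k by (rule fv.span_base) (auto simp: Ent_def)
    have eq: "(\<lambda>X. (X ** W) $ a $ b) = ((\<lambda>X. W$1$b * X$a$1) + (\<lambda>X. W$2$b * X$a$2)) + (\<lambda>X. W$3$b * X$a$3)"
      by (simp add: matrix_matrix_mult_def sum_3 plus_fun_def algebra_simps)
    show ?thesis unfolding eq
      by (intro fv.span_add fv.span_scale e)
  qed
  then show ?thesis by (simp add: Lin_def)
qed



lemma dep_rel:
  fixes f :: "nat \<Rightarrow> mat3 \<Rightarrow> real"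
  assumes fin: "finite B" and sp: "\<And>i. f i \<in> fv.span B"
  shows "\<exists>c N. (\<exists>i\<le>N. c i \<noteq> 0) \<and> (\<forall>X. (\<Sum>i\<le>N. c i * f i X) = 0)"
proof (cases "inj_on f {..card B}")
  case False
  then obtain i j where ij: "i \<le> card B" "j \<le> card B" "i \<noteq> j" "f i = f j"
    unfolding inj_on_def by auto
  define c where "c k = (if k = i then 1 else 0) - (if k = j then 1 else (0::real))" for k
  have "(\<Sum>k\<le>card B. c k * f k X) = 0" for X
  proof -
    have "(\<Sum>k\<le>card B. c k * f k X) = (\<Sum>k\<le>card B. (if k = i then f i X else 0) - (if k = j then f j X else 0))"
      by (rule sum.cong) (auto simp: c_def)
    also have "\<dots> = 0" using ij by (simp add: sum_subtractf)
    finally show ?thesis .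
  qed
  moreover have "c i \<noteq> 0" using ij by (simp add: c_def)
  ultimately show ?thesis using ij by blast
next
  case True
  let ?S = "f ` {..card B}"
  have cardS: "card ?S = Suc (card B)" using True by (simp add: card_image)
  have sub: "?S \<subseteq> fv.span B" using sp by auto
  have "fv.dependent ?S"
  proof (rule ccontr)
    assume "\<not> fv.dependent ?S"
    then have "card ?S \<le> card B" using fv.independent_span_bound[OF fin _ sub] by blast
    then show False using cardS by simp
  qed
  then obtain u where u: "\<exists>v\<in>?S. u v \<noteq> 0" "(\<Sum>v\<in>?S. (\<lambda>x. u v * v x)) = 0"
    using fv.dependent_finite[of ?S] by auto
  have "(\<Sum>i\<le>card B. u (f i) * f i X) = 0" for X
  proof -
    have "(\<Sum>v\<in>?S. u v * v X) = (\<Sum>v\<in>?S. (\<lambda>x. u v * v x)) X" by (simp add: sum_apply_fun)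
    also have "\<dots> = 0" using u(2) by simp
    finally have "(\<Sum>v\<in>?S. u v * v X) = 0" .
    then show ?thesis using sum.reindex[OF True, of "\<lambda>v. u v * v X"] by simp
  qed
  moreover obtain i where "i \<le> card B" "u (f i) \<noteq> 0" using u(1) by auto
  ultimately show ?thesis by (intro exI[of _ "\<lambda>i. u (f i)"] exI[of _ "card B"]) blast
qed

lemma matpow_0[simp]: "matpow A 0 = mat 1" by (simp add: matpow_def)
lemma matpow_Suc: "matpow A (Suc n) = A ** matpow A n" by (simp add: matpow_def)
lemma matpow_add: "matpow A (m + n) = matpow A m ** matpow A n"
  by (induction m) (simp_all add: matpow_Suc matrix_mul_assoc)
lemma matpow_Suc2: "matpow A (Suc n) = matpow A n ** A"
  using matpow_add[of A n 1] by (simp add: matpow_Suc)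
lemma matpow_inv: "V ** W = mat 1 \<Longrightarrow> matpow V m ** matpow W m = mat 1"
proof (induction m)
  case (Suc m)
  have "matpow V (Suc m) ** matpow W (Suc m) = matpow V m ** (V ** W) ** matpow W m"
    by (simp only: matpow_Suc2[of V] matpow_Suc[of W] matrix_mul_assoc)
  then show ?case using Suc by simp
qed simp

definition mclosed :: "mat3 set \<Rightarrow> bool" where
  "mclosed S \<longleftrightarrow> (\<forall>a\<in>S. \<forall>b\<in>S. a ** b \<in> S)"

lemma cl_sub: "S \<subseteq> cl S" by (auto simp: cl_def)

lemma cl_vanish: "x \<in> cl S \<Longrightarrow> polyfun p \<Longrightarrow> (\<forall>s\<in>S. p s = 0) \<Longrightarrow> p x = 0"
  by (auto simp: cl_def)

lemma cl_rmul_S: assumes "mclosed S" "X \<in> cl S" "a \<in> S" shows "X ** a \<in> cl S"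
  unfolding cl_def
proof (safe)
  fix p assume p: "polyfun p" "\<forall>s\<in>S. p s = 0"
  have "polyfun (\<lambda>Y. p (Y ** a))" by (rule polyfun_rmul[OF p(1)])
  moreover have "\<forall>s\<in>S. p (s ** a) = 0" using p(2) assms(1,3) by (auto simp: mclosed_def)
  ultimately show "p (X ** a) = 0" using cl_vanish[OF assms(2), of "\<lambda>Y. p (Y ** a)"] by simp
qed

lemma cl_mul: assumes "mclosed S" "X \<in> cl S" "Y \<in> cl S" shows "X ** Y \<in> cl S"
  unfolding cl_def
proof (safe)
  fix p assume p: "polyfun p" "\<forall>s\<in>S. p s = 0"
  have "polyfun (\<lambda>Y. p (X ** Y))" by (rule polyfun_lmul[OF p(1)])
  moreover have "\<forall>s\<in>S. p (X ** s) = 0"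
    using p cl_rmul_S[OF assms(1,2)] cl_vanish by blast
  ultimately show "p (X ** Y) = 0" using cl_vanish[OF assms(3), of "\<lambda>Y. p (X ** Y)"] by simp
qed

lemma matpow_in: "mclosed S \<Longrightarrow> w \<in> S \<Longrightarrow> matpow w (Suc k) \<in> S"
  by (induction k) (auto simp: matpow_Suc mclosed_def)

lemma cl_rinv:
  assumes mc: "mclosed S" and w: "w \<in> S" and vw: "v ** w = mat 1" and X: "X \<in> cl S"
  shows "X ** v \<in> cl S"
  unfolding cl_def
proof (safe)
  fix p assume p: "polyfun p" "\<forall>s\<in>S. p s = 0"
  have pw: "p (X ** matpow w k) = 0" for k
  proof (cases k)
    case 0 then show ?thesis using cl_vanish[OF X p] by simp
  next
    case (Suc k') then show ?thesis
      using cl_vanish[OF cl_rmul_S[OF mc X matpow_in[OF mc w]] p] by simp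
  qed
  obtain B where B: "finite B" "\<forall>\<Phi>\<in>Lin. (\<lambda>X. p (\<Phi> X)) \<in> fv.span B"
    using polyfun_span[OF p(1)] by blast
  have fi: "(\<lambda>Y. p (Y ** matpow w i)) \<in> fv.span B" for i
  proof -
    have "(\<lambda>X. p ((\<lambda>X. X ** matpow w i) X)) \<in> fv.span B" by (rule bspec[OF B(2) lin_rmul])
    then show ?thesis by simp
  qed
  obtain c N where cN: "\<exists>i\<le>N. c i \<noteq> 0"
    "\<forall>Y. (\<Sum>i\<le>N. c i * p (Y ** matpow w i)) = 0"
    using dep_rel[of B "\<lambda>i Y. p (Y ** matpow w i)", OF B(1) fi] by blast
  define i0 where "i0 = (LEAST i. c i \<noteq> 0)"
  obtain j where j: "j \<le> N" "c j \<noteq> 0" using cN(1) by blast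
  have ci0: "c i0 \<noteq> 0" unfolding i0_def by (rule LeastI[of _ j]) (rule j(2))
  have "i0 \<le> j" unfolding i0_def by (rule Least_le) (rule j(2))
  then have i0N: "i0 \<le> N" using j(1) by linarith
  have lt: "i < i0 \<Longrightarrow> c i = 0" for i using not_less_Least[of i "\<lambda>i. c i \<noteq> 0"] by (simp add: i0_def)
  let ?Y = "X ** matpow v (Suc i0)"
  have trm: "c i * p (?Y ** matpow w i) = (if i = i0 then c i0 * p (X ** v) else 0)" for i
  proof -
    consider "i < i0" | "i = i0" | "i > i0" by linarith
    then show ?thesis
    proof cases
      case 1 then show ?thesis using lt by simp
    next
      case 2
      have "matpow v (Suc i0) ** matpow w i0 = v ** (matpow v i0 ** matpow w i0)"
        by (simp add: matpow_Suc matrix_mul_assoc)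
      also have "\<dots> = v" using matpow_inv[OF vw] by simp
      finally have e: "matpow v (Suc i0) ** matpow w i0 = v" .
      have "?Y ** matpow w i0 = X ** v" using e by (metis matrix_mul_assoc)
      then show ?thesis using 2 by simp
    next
      case 3
      then have "i = Suc i0 + (i - Suc i0)" by simp
      then have "matpow w i = matpow w (Suc i0) ** matpow w (i - Suc i0)"
        by (metis matpow_add)
      then have "?Y ** matpow w i = X ** (matpow v (Suc i0) ** matpow w (Suc i0)) ** matpow w (i - Suc i0)"
        by (simp add: matrix_mul_assoc)
      then have "?Y ** matpow w i = X ** matpow w (i - Suc i0)" using matpow_inv[OF vw] by simp
      then show ?thesis using 3 pw by simp
    qed
  qed
  have "0 = (\<Sum>i\<le>N. c i * p (?Y ** matpow w i))" using cN(2) by simp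
  also have "\<dots> = (\<Sum>i\<le>N. (if i = i0 then c i0 * p (X ** v) else 0))" using trm by simp
  also have "\<dots> = c i0 * p (X ** v)" using i0N by simp
  finally show "p (X ** v) = 0" using ci0 by simp
qed

lemma cl_inv:
  assumes mc: "mclosed S" and w: "w \<in> S" and vw: "v ** w = mat 1" "w ** v = mat 1"
  shows "v \<in> cl S"
proof -
  have "mat 1 \<in> cl S" using cl_rinv[OF mc w vw(1), of w] cl_sub w vw(2) by auto
  from cl_rinv[OF mc w vw(1) this] show ?thesis by simp
qed

lemma cl_line:
  assumes "\<And>n. n \<ge> 1 \<Longrightarrow> C + real n *\<^sub>R D \<in> cl S"
  shows "C + t *\<^sub>R D \<in> cl S"
  unfolding cl_def
proof (safe)
  fix p assume p: "polyfun p" "\<forall>s\<in>S. p s = 0"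
  obtain Q where Q: "\<forall>t. p (C + t *\<^sub>R D) = poly Q t" using polyfun_line[OF p(1)] by blast
  have "poly Q (real n) = 0" if "n \<ge> 1" for n
    using cl_vanish[OF assms[OF that] p] Q by simp
  then have "real ` {1..} \<subseteq> {x. poly Q x = 0}" by auto
  moreover have "infinite (real ` {1::nat..})"
    using infinite_Ici[of "1::nat"] by (simp add: finite_image_iff)
  ultimately have "infinite {x. poly Q x = 0}" using finite_subset by blast
  then have "Q = 0" using poly_roots_finite by blast
  then show "p (C + t *\<^sub>R D) = 0" using Q by simp
qed



definition Nm :: "3 \<Rightarrow> mat3" where
  "Nm k = (\<chi> a b. if a = k \<and> b \<noteq> a then 1 else 0)"
definition U :: "3 \<Rightarrow> real \<Rightarrow> mat3" where
  "U k t = mat 1 + t *\<^sub>R Nm k"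
definition Em :: "3 \<Rightarrow> 3 \<Rightarrow> real \<Rightarrow> mat3" where
  "Em i j t = (\<chi> a b. if a = b then 1 else if a = i \<and> b = j then t else 0)"
definition D3 :: "real \<Rightarrow> real \<Rightarrow> real \<Rightarrow> mat3" where
  "D3 a b c = vector [vector [a,0,0], vector [0,b,0], vector [0,0,c]]"

lemmas msimps = vec_eq_iff forall_3 matrix_matrix_mult_def sum_3 U_def Nm_def Em_def D3_def mat_def

lemma U_add: "U k s ** U k t = U k (s + t)"
  using exhaust_3[of k] by (elim disjE) (simp_all add: msimps algebra_simps)

lemma Amat_U: "k \<in> {1,2,3} \<Longrightarrow> Amat k = U (of_nat k) 1"
  by (auto simp: msimps Amat_def A1_def A2_def A3_def)

lemma matpow_U: "matpow (U k 1) n = U k (real n)"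
proof (induction n)
  case 0 then show ?case by (simp add: U_def)
next
  case (Suc n) then show ?case by (simp add: matpow_Suc U_add add.commute)
qed

lemma Em12: "Em 1 2 t = U 1 (3*t/4) ** (U 2 1 ** U 3 1 ** U 1 (-1)) ** U 2 (t/4) ** (U 1 1 ** U 3 (-1) ** U 2 (-1))"
  by (simp add: msimps algebra_simps)

lemma Em13: "Em 1 3 t = U 1 (t/4) ** (U 2 1 ** U 3 1 ** U 1 (-1)) ** U 2 (-t/4) ** (U 1 1 ** U 3 (-1) ** U 2 (-1))"
  by (simp add: msimps algebra_simps)

lemma Em23: "Em 2 3 t = U 2 (3*t/4) ** (U 3 1 ** U 1 1 ** U 2 (-1)) ** U 3 (t/4) ** (U 2 1 ** U 1 (-1) ** U 3 (-1))"
  by (simp add: msimps algebra_simps)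

lemma Em21: "Em 2 1 t = U 2 (t/4) ** (U 3 1 ** U 1 1 ** U 2 (-1)) ** U 3 (-t/4) ** (U 2 1 ** U 1 (-1) ** U 3 (-1))"
  by (simp add: msimps algebra_simps)

lemma Em31: "Em 3 1 t = U 3 (3*t/4) ** (U 1 1 ** U 2 1 ** U 3 (-1)) ** U 1 (t/4) ** (U 3 1 ** U 2 (-1) ** U 1 (-1))"
  by (simp add: msimps algebra_simps)

lemma Em32: "Em 3 2 t = U 3 (t/4) ** (U 1 1 ** U 2 1 ** U 3 (-1)) ** U 1 (-t/4) ** (U 3 1 ** U 2 (-1) ** U 1 (-1))"
  by (simp add: msimps algebra_simps)

lemma h12: "a \<noteq> 0 \<Longrightarrow> Em 1 2 a ** Em 2 1 (-1/a) ** Em 1 2 a ** Em 1 2 (-1) ** Em 2 1 1 ** Em 1 2 (-1) = D3 a (1/a) 1"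
  by (simp add: msimps field_simps)
lemma h23: "b \<noteq> 0 \<Longrightarrow> Em 2 3 b ** Em 3 2 (-1/b) ** Em 2 3 b ** Em 2 3 (-1) ** Em 3 2 1 ** Em 2 3 (-1) = D3 1 b (1/b)"
  by (simp add: msimps field_simps)
lemma D3_mul: "D3 a b c ** D3 a' b' c' = D3 (a*a') (b*b') (c*c')"
  by (simp add: msimps)

lemma Lprod: "Em 2 1 p ** Em 3 1 q ** Em 3 2 r = vector [vector [1,0,0], vector [p,1,0], vector [q,r,1]]"
  by (simp add: msimps)
lemma Uprod: "Em 2 3 x ** Em 1 3 y ** Em 1 2 z = vector [vector [1,z,y], vector [0,1,x], vector [0,0,1]]"
  by (simp add: msimps)
lemma LDUprod: "vector [vector [1,0,0], vector [p,1,0], vector [q,r,1]] ** D3 d1 d2 d3 **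
   vector [vector [1,z,y], vector [0,1,x], vector [0,0,1]] =
   (vector [vector [d1, d1*z, d1*y], vector [p*d1, p*d1*z + d2, p*d1*y + d2*x],
            vector [q*d1, q*d1*z + r*d2, q*d1*y + r*d2*x + d3]] :: mat3)"
  by (simp add: msimps algebra_simps)

lemma LDU_aux:
  fixes a c g i D H F :: real
  assumes a: "a \<noteq> 0" and D: "D \<noteq> 0" and h: "g*c*D + H*F + a = i*a*D"
  shows "g/a*a*(c/a) + (H/D)*(D/a)*(F/D) + 1/D = i"
proof -
  have "g/a*a*(c/a) + (H/D)*(D/a)*(F/D) + 1/D = (g*c*D + H*F + a)/(a*D)"
    using a D by (simp add: field_simps)
  also have "\<dots> = i" using h a D by simp
  finally show ?thesis .
qed

lemma LDU_entry33:
  fixes a b c d e f g h i :: real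
  assumes a: "a \<noteq> 0" and D: "a*e - b*d \<noteq> 0"
    and det: "a*e*i + b*f*g + c*d*h - a*f*h - b*d*i - c*e*g = 1"
  shows "g/a*a*(c/a) + ((a*h - g*b)/(a*e - b*d))*((a*e - b*d)/a)*((a*f - d*c)/(a*e - b*d)) + 1/(a*e - b*d) = i"
proof -
  have "g*c*(a*e - b*d) + (a*h - g*b)*(a*f - d*c) + a = i*a*(a*e - b*d)"
  proof -
    have "a = a * (a*e*i + b*f*g + c*d*h - a*f*h - b*d*i - c*e*g)" using det by simp
    then show ?thesis by (simp add: algebra_simps)
  qed
  then show ?thesis by (rule LDU_aux[OF a D])
qed

lemma LDU_abc:
  fixes a b c d e f g h i :: real
  assumes a: "a \<noteq> 0" and D: "a*e - b*d \<noteq> 0"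
    and det: "a*e*i + b*f*g + c*d*h - a*f*h - b*d*i - c*e*g = 1"
  shows "(vector [vector [a,b,c], vector [d,e,f], vector [g,h,i]] :: mat3) =
    (Em 2 1 (d/a) ** Em 3 1 (g/a) ** Em 3 2 ((a*h - g*b)/(a*e - b*d)))
     ** D3 a ((a*e - b*d)/a) (1/(a*e - b*d))
     ** (Em 2 3 ((a*f - d*c)/(a*e - b*d)) ** Em 1 3 (c/a) ** Em 1 2 (b/a))"
  unfolding Lprod Uprod LDUprod
proof -
  have e33: "g/a*a*(c/a) + ((a*h - g*b)/(a*e - b*d))*((a*e - b*d)/a)*((a*f - d*c)/(a*e - b*d)) + 1/(a*e - b*d) = i"
    by (rule LDU_entry33[OF a D det])
  have e22: "d/a*a*(b/a) + (a*e - b*d)/a = e" using a by (simp add: field_simps)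
  have e23: "d/a*a*(c/a) + (a*e - b*d)/a * ((a*f - d*c)/(a*e - b*d)) = f" using a D by (simp add: field_simps)
  have e32: "g/a*a*(b/a) + (a*h - g*b)/(a*e - b*d) * ((a*e - b*d)/a) = h" using a D by (simp add: field_simps)
  show "(vector [vector [a,b,c], vector [d,e,f], vector [g,h,i]] :: mat3) =
    vector [vector [a, a*(b/a), a*(c/a)], vector [d/a*a, d/a*a*(b/a) + (a*e - b*d)/a, d/a*a*(c/a) + (a*e - b*d)/a * ((a*f - d*c)/(a*e - b*d))],
            vector [g/a*a, g/a*a*(b/a) + (a*h - g*b)/(a*e - b*d) * ((a*e - b*d)/a),
               g/a*a*(c/a) + ((a*h - g*b)/(a*e - b*d))*((a*e - b*d)/a)*((a*f - d*c)/(a*e - b*d)) + 1/(a*e - b*d)]]"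
    unfolding e33 e22 e23 e32 using a by simp
qed

lemma mat_entries: "(M::mat3) = vector [vector [M$1$1, M$1$2, M$1$3], vector [M$2$1, M$2$2, M$2$3], vector [M$3$1, M$3$2, M$3$3]]"
  by (simp add: vec_eq_iff forall_3)

lemma det_entries: "det (M::mat3) = M$1$1*M$2$2*M$3$3 + M$1$2*M$2$3*M$3$1 + M$1$3*M$2$1*M$3$2
     - M$1$1*M$2$3*M$3$2 - M$1$2*M$2$1*M$3$3 - M$1$3*M$2$2*M$3$1"
  by (simp add: det_3 algebra_simps)



lemma det_Em: "i \<noteq> j \<Longrightarrow> det (Em i j t) = 1"
  using exhaust_3[of i] exhaust_3[of j]
  by (elim disjE) (simp_all add: det_3 Em_def)

lemma Em_inv: "Em i j (-t) ** (Em i j t ** M) = M" if "i \<noteq> j"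
proof -
  have "Em i j (-t) ** Em i j t = mat 1"
    using that exhaust_3[of i] exhaust_3[of j] by (elim disjE) (simp_all add: msimps)
  then show ?thesis by (metis matrix_mul_assoc matrix_mul_lid)
qed

context
  fixes G :: "mat3 set"
  assumes mul: "\<And>X Y. X \<in> G \<Longrightarrow> Y \<in> G \<Longrightarrow> X ** Y \<in> G"
    and E: "\<And>i j t. i \<noteq> j \<Longrightarrow> Em i j t \<in> G"
begin

lemma G_D3: "a \<noteq> 0 \<Longrightarrow> D \<noteq> 0 \<Longrightarrow> D3 a (D/a) (1/D) \<in> G"
proof -
  assume a: "a \<noteq> 0" and D: "D \<noteq> 0"
  have "D3 a (1/a) 1 \<in> G" unfolding h12[OF a, symmetric] by (intro mul E) simp_all
  moreover have "D3 1 D (1/D) \<in> G" unfolding h23[OF D, symmetric] by (intro mul E) simp_all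
  ultimately have "D3 a (1/a) 1 ** D3 1 D (1/D) \<in> G" by (rule mul)
  then show ?thesis by (simp add: D3_mul)
qed

lemma G_A:
  assumes det: "det M = 1" and d1: "M$1$1 \<noteq> 0" and d2: "M$1$1 * M$2$2 - M$1$2 * M$2$1 \<noteq> 0"
  shows "M \<in> G"
proof -
  have "M = (Em 2 1 (M$2$1/M$1$1) ** Em 3 1 (M$3$1/M$1$1) ** Em 3 2 ((M$1$1*M$3$2 - M$3$1*M$1$2)/(M$1$1 * M$2$2 - M$1$2 * M$2$1)))
     ** D3 (M$1$1) ((M$1$1 * M$2$2 - M$1$2 * M$2$1)/M$1$1) (1/(M$1$1 * M$2$2 - M$1$2 * M$2$1))
     ** (Em 2 3 ((M$1$1*M$2$3 - M$2$1*M$1$3)/(M$1$1 * M$2$2 - M$1$2 * M$2$1)) ** Em 1 3 (M$1$3/M$1$1) ** Em 1 2 (M$1$2/M$1$1))"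
    apply (subst mat_entries)
    apply (rule LDU_abc[OF d1 d2])
    using det by (simp add: det_entries algebra_simps)
  also have "\<dots> \<in> G"
    by (intro mul E G_D3 d1 d2) simp_all
  finally show ?thesis .
qed

lemma G_B:
  assumes det: "det M = 1" and d1: "M$1$1 \<noteq> 0"
  shows "M \<in> G"
proof (cases "M$1$1 * M$2$2 - M$1$2 * M$2$1 = 0")
  case False then show ?thesis using G_A det d1 by blast
next
  case True
  let ?M' = "Em 2 3 1 ** M"
  have "M$1$1 * M$3$2 - M$1$2 * M$3$1 \<noteq> 0"
  proof
    assume h: "M$1$1 * M$3$2 - M$1$2 * M$3$1 = 0"
    have "M$1$1 * (M$2$1*M$3$2 - M$2$2*M$3$1) = M$2$1*(M$1$1*M$3$2) - M$3$1*(M$1$1*M$2$2)"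
      by (simp add: algebra_simps)
    also have "\<dots> = M$2$1*(M$1$2*M$3$1) - M$3$1*(M$1$2*M$2$1)"
      using h True by (simp add: algebra_simps)
    also have "\<dots> = 0" by simp
    finally have z: "M$2$1*M$3$2 - M$2$2*M$3$1 = 0" using d1 by simp
    have "det M = M$1$3*(M$2$1*M$3$2 - M$2$2*M$3$1) - M$2$3*(M$1$1 * M$3$2 - M$1$2 * M$3$1)
        + M$3$3*(M$1$1 * M$2$2 - M$1$2 * M$2$1)"
      by (simp add: det_entries algebra_simps)
    then have "det M = 0" using z h True by simp
    then show False using det by simp
  qed
  moreover have "det ?M' = 1" using det by (simp add: det_mul det_Em)
  moreover have "?M'$1$1 = M$1$1" "?M'$1$2 = M$1$2" "?M'$2$1 = M$2$1 + M$3$1" "?M'$2$2 = M$2$2 + M$3$2"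
    by (simp_all add: msimps)
  ultimately have "?M' \<in> G" using G_A[of ?M'] d1 True by (simp add: algebra_simps)
  then have "Em 2 3 (-1) ** ?M' \<in> G" using mul[OF E[of 2 3 "-1"]] by simp
  then show ?thesis using Em_inv[of 2 3 1 M] by simp
qed

lemma G_C:
  assumes det: "det M = 1"
  shows "M \<in> G"
proof -
  have nz: "\<not> (M$1$1 = 0 \<and> M$2$1 = 0 \<and> M$3$1 = 0)" using det by (auto simp: det_entries)
  consider "M$1$1 \<noteq> 0" | "M$1$1 = 0" "M$2$1 \<noteq> 0" | "M$1$1 = 0" "M$2$1 = 0" "M$3$1 \<noteq> 0"
    using nz by blast
  then show ?thesis
  proof cases
    case 1 then show ?thesis using G_B det by blast
  next
    case 2
    let ?M' = "Em 1 2 1 ** M"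
    have "det ?M' = 1" using det by (simp add: det_mul det_Em)
    moreover have "?M'$1$1 \<noteq> 0" using 2 by (simp add: msimps)
    ultimately have "?M' \<in> G" by (rule G_B)
    then have "Em 1 2 (-1) ** ?M' \<in> G" using mul[OF E[of 1 2 "-1"]] by simp
    then show ?thesis using Em_inv[of 1 2 1 M] by simp
  next
    case 3
    let ?M' = "Em 1 3 1 ** M"
    have "det ?M' = 1" using det by (simp add: det_mul det_Em)
    moreover have "?M'$1$1 \<noteq> 0" using 3 by (simp add: msimps)
    ultimately have "?M' \<in> G" by (rule G_B)
    then have "Em 1 3 (-1) ** ?M' \<in> G" using mul[OF E[of 1 3 "-1"]] by simp
    then show ?thesis using Em_inv[of 1 3 1 M] by simp
  qed
qed

end



lemma U0: "U k 0 = mat 1" by (simp add: U_def)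

lemma det_U: "det (U k t) = 1"
  using exhaust_3[of k] by (elim disjE) (simp_all add: det_3 msimps)

lemma U_in_cl:
  assumes mc: "mclosed S" and s1: "U k 1 ** U j 1 \<in> S" and s2: "U k 2 ** U j 1 \<in> S"
  shows "U k 1 \<in> cl S"
proof -
  let ?v = "U j (-1) ** U k (-1)"
  have "?v ** (U k 1 ** U j 1) = U j (-1) ** (U k (-1) ** U k 1) ** U j 1"
    by (simp add: matrix_mul_assoc)
  also have "\<dots> = mat 1" by (simp add: U_add U0)
  finally have vw: "?v ** (U k 1 ** U j 1) = mat 1" .
  have wv: "(U k 1 ** U j 1) ** ?v = mat 1"
  proof -
    have "(U k 1 ** U j 1) ** ?v = U k 1 ** (U j 1 ** U j (-1)) ** U k (-1)"
      by (simp add: matrix_mul_assoc)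
    also have "\<dots> = mat 1" by (simp add: U_add U0)
    finally show ?thesis .
  qed
  have "?v \<in> cl S" by (rule cl_inv[OF mc s1 vw wv])
  then have "(U k 2 ** U j 1) ** ?v \<in> cl S" using cl_mul[OF mc] s2 cl_sub by blast
  moreover have "(U k 2 ** U j 1) ** ?v = U k 1"
  proof -
    have "(U k 2 ** U j 1) ** ?v = U k 2 ** (U j 1 ** U j (-1)) ** U k (-1)"
      by (simp add: matrix_mul_assoc)
    also have "\<dots> = U k 1" by (simp add: U_add U0)
    finally show ?thesis .
  qed
  ultimately show ?thesis by simp
qed

lemma U_line_cl:
  assumes mc: "mclosed S" and u1: "U k 1 \<in> cl S"
  shows "U k t \<in> cl S"
proof -
  have p: "matpow (U k 1) (Suc n) \<in> cl S" for n
    by (induction n) (auto simp: matpow_Suc intro: cl_mul[OF mc] u1)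
  have "mat 1 + real n *\<^sub>R Nm k \<in> cl S" if n1: "n \<ge> 1" for n
  proof -
    obtain m where "n = Suc m" using n1 by (cases n) auto
    moreover have "U k (real (Suc m)) \<in> cl S" using p[of m] by (simp only: matpow_U)
    ultimately show ?thesis by (simp add: U_def)
  qed
  then have "mat 1 + t *\<^sub>R Nm k \<in> cl S" by (rule cl_line)
  then show ?thesis by (simp add: U_def)
qed

definition gm :: "nat \<Rightarrow> nat \<Rightarrow> nat \<Rightarrow> mat3" where
  "gm i j n = matpow (Amat i) n ** Amat j"

definition F0 :: "mat3 set" where
  "F0 = {gm 1 2 1, gm 1 2 2, gm 2 1 1, gm 2 1 2, gm 3 1 1, gm 3 1 2}"

lemma gm_Gamma: "i \<in> {1,2,3} \<Longrightarrow> j \<in> {1,2,3} \<Longrightarrow> i \<noteq> j \<Longrightarrow> n \<ge> 1 \<Longrightarrow> gm i j n \<in> GammaSet"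
  unfolding GammaSet_def gm_def by blast

lemma F0_Gamma: "F0 \<subseteq> GammaSet"
  unfolding F0_def by (simp add: gm_Gamma)

lemma gm_U: "i \<in> {1,2,3} \<Longrightarrow> j \<in> {1,2,3} \<Longrightarrow> gm i j n = U (of_nat i) (real n) ** U (of_nat j) 1"
  by (simp add: gm_def Amat_U matpow_U)

lemma mclosed_sg: "mclosed (semigroup_gen F)"
  by (auto simp: mclosed_def intro: semigroup_gen.mul)

lemma Ucl_all: "U k t \<in> cl (semigroup_gen F0)"
proof -
  let ?S = "semigroup_gen F0"
  have inS: "f \<in> F0 \<Longrightarrow> f \<in> ?S" for f by (rule semigroup_gen.gen)
  have "U 1 1 \<in> cl ?S"
    apply (rule U_in_cl[OF mclosed_sg, of _ 2])
    using inS[of "gm 1 2 1"] inS[of "gm 1 2 2"] by (simp_all add: F0_def gm_U)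
  moreover have "U 2 1 \<in> cl ?S"
    apply (rule U_in_cl[OF mclosed_sg, of _ 1])
    using inS[of "gm 2 1 1"] inS[of "gm 2 1 2"] by (simp_all add: F0_def gm_U)
  moreover have "U 3 1 \<in> cl ?S"
    apply (rule U_in_cl[OF mclosed_sg, of _ 1])
    using inS[of "gm 3 1 1"] inS[of "gm 3 1 2"] by (simp_all add: F0_def gm_U)
  ultimately show ?thesis using exhaust_3[of k] U_line_cl[OF mclosed_sg] by blast
qed

lemma Emcl12: "Em 1 2 t \<in> cl (semigroup_gen F0)"
  unfolding Em12 by (intro cl_mul[OF mclosed_sg] Ucl_all)

lemma Emcl13: "Em 1 3 t \<in> cl (semigroup_gen F0)"
  unfolding Em13 by (intro cl_mul[OF mclosed_sg] Ucl_all)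

lemma Emcl21: "Em 2 1 t \<in> cl (semigroup_gen F0)"
  unfolding Em21 by (intro cl_mul[OF mclosed_sg] Ucl_all)

lemma Emcl23: "Em 2 3 t \<in> cl (semigroup_gen F0)"
  unfolding Em23 by (intro cl_mul[OF mclosed_sg] Ucl_all)

lemma Emcl31: "Em 3 1 t \<in> cl (semigroup_gen F0)"
  unfolding Em31 by (intro cl_mul[OF mclosed_sg] Ucl_all)

lemma Emcl32: "Em 3 2 t \<in> cl (semigroup_gen F0)"
  unfolding Em32 by (intro cl_mul[OF mclosed_sg] Ucl_all)

lemma Emcl: "i \<noteq> j \<Longrightarrow> Em i j t \<in> cl (semigroup_gen F0)"
  using exhaust_3[of i] exhaust_3[of j]
  by (elim disjE) (simp_all add: Emcl12 Emcl13 Emcl21 Emcl23 Emcl31 Emcl32)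

lemma SL3_cl: "SL3 \<subseteq> cl (semigroup_gen F0)"
  using G_C[of "cl (semigroup_gen F0)", OF cl_mul[OF mclosed_sg] Emcl] by (auto simp: SL3_def)

lemma Gamma_SL3: "GammaSet \<subseteq> SL3"
proof
  fix g assume "g \<in> GammaSet"
  then obtain i j n where "g = matpow (Amat i) n ** Amat j" "i \<in> {1,2,3}" "j \<in> {1,2,3}"
    unfolding GammaSet_def by blast
  then have "g = gm i j n" by (simp add: gm_def)
  then show "g \<in> SL3" using \<open>i \<in> _\<close> \<open>j \<in> _\<close> by (simp add: gm_U det_mul det_U SL3_def)
qed

lemma sg_SL3: "F \<subseteq> SL3 \<Longrightarrow> semigroup_gen F \<subseteq> SL3"
proof
  fix x assume F: "F \<subseteq> SL3" and x: "x \<in> semigroup_gen F"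
  from x show "x \<in> SL3"
    by (induction rule: semigroup_gen.induct) (use F in \<open>auto simp: SL3_def det_mul\<close>)
qed

lemma sg_mono: "F \<subseteq> F' \<Longrightarrow> semigroup_gen F \<subseteq> semigroup_gen F'"
proof
  fix x assume F: "F \<subseteq> F'" and x: "x \<in> semigroup_gen F"
  from x show "x \<in> semigroup_gen F'"
    by (induction rule: semigroup_gen.induct) (use F in \<open>auto intro: semigroup_gen.intros\<close>)
qed

lemma cl_mono: "S \<subseteq> T \<Longrightarrow> cl S \<subseteq> cl T"
  unfolding cl_def by blast

lemma finite_in_incseq:
  fixes GN :: "nat \<Rightarrow> mat3 set"
  assumes "finite F" "F \<subseteq> (\<Union>N. GN N)" "incseq GN"
  shows "\<exists>N. F \<subseteq> GN N"
  using assms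
proof (induction F rule: finite_induct)
  case empty then show ?case by simp
next
  case (insert x F)
  then obtain N1 where N1: "F \<subseteq> GN N1" by auto
  obtain N2 where N2: "x \<in> GN N2" using insert(4) by auto
  have "GN N1 \<subseteq> GN (max N1 N2)" "GN N2 \<subseteq> GN (max N1 N2)"
    using insert(5) by (auto simp: incseq_def)
  then show ?case using N1 N2 by blast
qed

theorem proposition6p8:
  fixes GN :: "nat \<Rightarrow> mat3 set"
  assumes "\<And>N. finite (GN N)"
    and "\<And>N. GN N \<subseteq> GammaSet"
    and "incseq GN"
    and "(\<Union>N. GN N) = GammaSet"
  shows "\<exists>N0. \<forall>N\<ge>N0. zariski_dense_SL3 (semigroup_gen (GN N))"
proof -
  have "finite F0" by (simp add: F0_def)
  then obtain N0 where N0: "F0 \<subseteq> GN N0"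
    using finite_in_incseq[of F0 GN] F0_Gamma assms(3,4) by auto
  have "zariski_dense_SL3 (semigroup_gen (GN N))" if "N \<ge> N0" for N
  proof -
    have sub: "F0 \<subseteq> GN N" using N0 assms(3) that by (auto simp: incseq_def)
    have s: "semigroup_gen (GN N) \<subseteq> SL3" using assms(2) Gamma_SL3 by (intro sg_SL3) blast
    have "SL3 \<subseteq> cl (semigroup_gen (GN N))"
      using SL3_cl cl_mono[OF sg_mono[OF sub]] by blast
    then have "zariski_closure_SL3 (semigroup_gen (GN N)) = SL3"
      unfolding zariski_closure_SL3_def cl_def by blast
    then show ?thesis using s by (simp add: zariski_dense_SL3_def)
  qed
  then show ?thesis by blast
qed

end
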